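(* If $L$ is a lattice with associated torus $T=\mathrm{T}(1)\otimes L$, where $\mathrm{T}(1)=\mathbb{R}/\mathbb{Z}$, then there is a natural bijection between marked reflection structures on $L$ and marked reflection structures on $T$.
   Context: A lattice is a free abelian group of finite rank; $\mathrm{Aut}(L)=\mathrm{Aut}(T)$ for $T=\mathrm{T}(1)\otimes L$. A reflection on $L$ is an automorphism conjugate in $GL(r,\mathbb{Q})$ to $\mathrm{diag}(-1,1,\dots,1)$; an automorphism of $T$ is a reflection if the induced automorphism of $L=\pi_1T$ is. A marking of a reflection $\sigma$ of $L$ is an equivalence class $\pm(b,\beta)$, up to sign, of pairs with $b\in L$, $\beta:L\to\mathbb{Z}$ a homomorphism and $\sigma(x)=x+\beta(x)b$ for all $x$. A marked reflection structure on $L$ is a finite subgroup $W\subset\mathrm{Aut}(L)$ generated by its reflections, with markings $\pm(b_\sigma,\beta_\sigma)$ for every reflection $\sigma\in W$ such that $(w(b_\sigma),\beta_\sigma\circ w^{-1})=\pm(b_{w\sigma w^{-1}},\beta_{w\sigma w^{-1}})$ for $w\in W$. For the torus (written additively): a reflection $\sigma$ of $T$ is trivial mod $2$ if it fixes all $x$ with $2x=0$; a marking of $\sigma$ is an $h\in T$ lying in the identity component of $\{x:\sigma(x)=-x\}$ with $2h=0$ and $h\ne0$ if $\sigma$ is nontrivial mod $2$. A marked reflection structure on $T$ is a finite subgroup $W\subset\mathrm{Aut}(T)$ generated by its reflections with a marking $h_\sigma$ for each reflection $\sigma\in W$ such that $h_{w\sigma w^{-1}}=w(h_\sigma)$ for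 all $w\in W$. *)

theory Defs
  imports "HOL-Analysis.Analysis"
begin

text \<open>The lattice L is modelled as Z^n (type int^'n, 'n finite); every lattice of
  positive rank is isomorphic to one of these.  The torus T = T(1) (x) L is modelled
  as the product of unit circles in C^n (T(1) = R/Z identified with the unit circle via
  t |-> exp(2 pi i t)), written multiplicatively.\<close>


definition is_aut :: "(int^'n \<Rightarrow> int^'n) \<Rightarrow> bool" where
  "is_aut g \<longleftrightarrow> bij g \<and> (\<forall>x y. g (x + y) = g x + g y)"

definition Aut :: "(int^'n \<Rightarrow> int^'n) set" where
  "Aut = {g. is_aut g}"

definition rat_mat :: "(int^'n \<Rightarrow> int^'n) \<Rightarrow> rat^'n^'n" where
  "rat_mat g = (\<chi> i j. of_int (g (axis j 1) $ i))"

definition refl_diag :: "'n \<Rightarrow> rat^'n^'n" where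
  "refl_diag k = (\<chi> i j. if i = j then (if i = k then -1 else 1) else 0)"

definition is_reflection :: "(int^'n \<Rightarrow> int^'n) \<Rightarrow> bool" where
  "is_reflection \<sigma> \<longleftrightarrow> is_aut \<sigma> \<and>
     (\<exists>(P::rat^'n^'n) Q k. P ** Q = mat 1 \<and> Q ** P = mat 1 \<and> Q ** rat_mat \<sigma> ** P = refl_diag k)"

definition aut_subgroup :: "(int^'n \<Rightarrow> int^'n) set \<Rightarrow> bool" where
  "aut_subgroup H \<longleftrightarrow> H \<subseteq> Aut \<and> id \<in> H \<and> (\<forall>g\<in>H. \<forall>h\<in>H. g \<circ> h \<in> H) \<and> (\<forall>g\<in>H. inv g \<in> H)"

definition reflections_in :: "(int^'n \<Rightarrow> int^'n) set \<Rightarrow> (int^'n \<Rightarrow> int^'n) set" where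
  "reflections_in W = {\<sigma>\<in>W. is_reflection \<sigma>}"

text \<open>Finite subgroup of Aut(L) (= Aut(T)) generated by its reflections.\<close>
definition refl_group :: "(int^'n \<Rightarrow> int^'n) set \<Rightarrow> bool" where
  "refl_group W \<longleftrightarrow> aut_subgroup W \<and> finite W \<and>
     W = \<Inter>{H. aut_subgroup H \<and> reflections_in W \<subseteq> H}"

definition is_hom :: "(int^'n \<Rightarrow> int) \<Rightarrow> bool" where
  "is_hom \<beta> \<longleftrightarrow> (\<forall>x y. \<beta> (x + y) = \<beta> x + \<beta> y)"

definition mark_class :: "int^'n \<Rightarrow> (int^'n \<Rightarrow> int) \<Rightarrow> ((int^'n) \<times> (int^'n \<Rightarrow> int)) set" where
  "mark_class b \<beta> = {(b, \<beta>), (- b, \<lambda>x. - \<beta> x)}"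

definition is_L_marking :: "(int^'n \<Rightarrow> int^'n) \<Rightarrow> ((int^'n) \<times> (int^'n \<Rightarrow> int)) set \<Rightarrow> bool" where
  "is_L_marking \<sigma> M \<longleftrightarrow>
     (\<exists>b \<beta>. is_hom \<beta> \<and> (\<forall>x. \<sigma> x = x + \<beta> x *s b) \<and> M = mark_class b \<beta>)"

definition L_act_mark :: "(int^'n \<Rightarrow> int^'n) \<Rightarrow> ((int^'n) \<times> (int^'n \<Rightarrow> int)) set \<Rightarrow> ((int^'n) \<times> (int^'n \<Rightarrow> int)) set" where
  "L_act_mark w M = (\<lambda>(b, \<beta>). (w b, \<beta> \<circ> inv w)) ` M"

definition L_mrs :: "((int^'n \<Rightarrow> int^'n) set \<times> ((int^'n \<Rightarrow> int^'n) \<Rightarrow> ((int^'n) \<times> (int^'n \<Rightarrow> int)) set option)) set" where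
  "L_mrs = {(W, mk). refl_group W \<and>
     (\<forall>\<sigma>. \<sigma> \<notin> reflections_in W \<longrightarrow> mk \<sigma> = None) \<and>
     (\<forall>\<sigma>\<in>reflections_in W. \<exists>M. mk \<sigma> = Some M \<and> is_L_marking \<sigma> M) \<and>
     (\<forall>w\<in>W. \<forall>\<sigma>\<in>reflections_in W. mk (w \<circ> \<sigma> \<circ> inv w) = map_option (L_act_mark w) (mk \<sigma>))}"

definition torus :: "(complex^'n) set" where
  "torus = {z. \<forall>i. norm (z $ i) = 1}"

definition T_one :: "complex^'n" where
  "T_one = (\<chi> i. 1)"

definition T_neg :: "complex^'n \<Rightarrow> complex^'n" where
  "T_neg z = (\<chi> i. inverse (z $ i))"

definition T_act :: "(int^'n \<Rightarrow> int^'n) \<Rightarrow> complex^'n \<Rightarrow> complex^'n" where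
  "T_act g z = (\<chi> i. \<Prod>j\<in>UNIV. (z $ j) powi (g (axis j 1) $ i))"

definition trivial_mod2 :: "(int^'n \<Rightarrow> int^'n) \<Rightarrow> bool" where
  "trivial_mod2 \<sigma> \<longleftrightarrow> (\<forall>z\<in>torus. (\<forall>i. (z $ i)^2 = 1) \<longrightarrow> T_act \<sigma> z = z)"

definition is_T_marking :: "(int^'n \<Rightarrow> int^'n) \<Rightarrow> complex^'n \<Rightarrow> bool" where
  "is_T_marking \<sigma> h \<longleftrightarrow> h \<in> torus \<and>
     h \<in> connected_component_set {x \<in> torus. T_act \<sigma> x = T_neg x} T_one \<and>
     (\<forall>i. (h $ i)^2 = 1) \<and>
     (\<not> trivial_mod2 \<sigma> \<longrightarrow> h \<noteq> T_one)"

definition T_mrs :: "((int^'n \<Rightarrow> int^'n) set \<times> ((int^'n \<Rightarrow> int^'n) \<Rightarrow> (complex^'n) option)) set" where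
  "T_mrs = {(W, mh). refl_group W \<and>
     (\<forall>\<sigma>. \<sigma> \<notin> reflections_in W \<longrightarrow> mh \<sigma> = None) \<and>
     (\<forall>\<sigma>\<in>reflections_in W. \<exists>h. mh \<sigma> = Some h \<and> is_T_marking \<sigma> h) \<and>
     (\<forall>w\<in>W. \<forall>\<sigma>\<in>reflections_in W. mh (w \<circ> \<sigma> \<circ> inv w) = map_option (T_act w) (mh \<sigma>))}"

definition L_transport :: "(int^'n \<Rightarrow> int^'n) \<Rightarrow> ((int^'n \<Rightarrow> int^'n) set \<times> ((int^'n \<Rightarrow> int^'n) \<Rightarrow> ((int^'n) \<times> (int^'n \<Rightarrow> int)) set option))
   \<Rightarrow> ((int^'n \<Rightarrow> int^'n) set \<times> ((int^'n \<Rightarrow> int^'n) \<Rightarrow> ((int^'n) \<times> (int^'n \<Rightarrow> int)) set option))" where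
  "L_transport g S = ((\<lambda>w. g \<circ> w \<circ> inv g) ` fst S,
      \<lambda>\<tau>. map_option (L_act_mark g) (snd S (inv g \<circ> \<tau> \<circ> g)))"

definition T_transport :: "(int^'n \<Rightarrow> int^'n) \<Rightarrow> ((int^'n \<Rightarrow> int^'n) set \<times> ((int^'n \<Rightarrow> int^'n) \<Rightarrow> (complex^'n) option))
   \<Rightarrow> ((int^'n \<Rightarrow> int^'n) set \<times> ((int^'n \<Rightarrow> int^'n) \<Rightarrow> (complex^'n) option))" where
  "T_transport g S = ((\<lambda>w. g \<circ> w \<circ> inv g) ` fst S,
      \<lambda>\<tau>. map_option (T_act g) (snd S (inv g \<circ> \<tau> \<circ> g)))"

end

theory Submission
  imports Defs
begin

lemma add_zero: fixes g :: "'a::ab_group_add \<Rightarrow> 'b::ab_group_add"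
  assumes "\<forall>x y. g (x + y) = g x + g y" shows "g 0 = 0"
  using assms[rule_format, of 0 0] by simp

lemma add_neg: fixes g :: "'a::ab_group_add \<Rightarrow> 'b::ab_group_add" assumes "\<forall>x y. g (x + y) = g x + g y" shows "g (- x) = - g x"
  using assms[rule_format, of x "-x"] add_zero[OF assms] by (simp add: eq_neg_iff_add_eq_0 add.commute)

lemma add_sum: fixes g :: "'a::ab_group_add \<Rightarrow> 'b::ab_group_add" assumes "\<forall>x y. g (x + y) = g x + g y" shows "g (sum f A) = (\<Sum>a\<in>A. g (f a))"
  apply (induction A rule: infinite_finite_induct)
  using add_zero[OF assms] assms by auto

lemma add_smult: assumes "\<forall>x y. g (x + y) = g x + (g y :: int^'m)"
  shows "g ((m::int) *s x) = m *s g (x::int^'n)"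
proof -
  have n: "g (int k *s x) = int k *s g x" for k
    by (induction k) (simp_all add: add_zero[OF assms] assms vector_sadd_rdistrib)
  show ?thesis
  proof (cases "m \<ge> 0")
    case True then show ?thesis using n[of "nat m"] by simp
  next
    case False
    then have "m = - int (nat (-m))" by simp
    then show ?thesis using n[of "nat (-m)"] add_neg[OF assms, of "int (nat (-m)) *s x"]
      by (metis scalar_mult_eq_scaleR vector_smult_lneg) 
  qed
qed

lemma add_mult: assumes "\<forall>x y. g (x + y) = g x + (g y :: int)"
  shows "g ((m::int) *s x) = m * g (x::int^'n)"
proof -
  have n: "g (int k *s x) = int k * g x" for k
    by (induction k) (simp_all add: add_zero[OF assms] assms vector_sadd_rdistrib algebra_simps)
  show ?thesis
  proof (cases "m \<ge> 0")
    case True then show ?thesis using n[of "nat m"] by simp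
  next
    case False
    then have "m = - int (nat (-m))" by simp
    then show ?thesis using n[of "nat (-m)"] add_neg[OF assms, of "int (nat (-m)) *s x"]
      by (metis mult_minus_left vector_smult_lneg)
  qed
qed

lemma lin_vec: assumes "\<forall>x y. g (x + y) = g x + (g y :: int^'m)"
  shows "g x = (\<Sum>j\<in>UNIV. (x$j) *s g (axis j 1))"
proof -
  have "g x = g (\<Sum>j\<in>UNIV. (x$j) *s axis j (1::int))" by (simp add: basis_expansion)
  also have "\<dots> = (\<Sum>j\<in>UNIV. (x$j) *s g (axis j 1))" by (simp add: add_sum[OF assms] add_smult[OF assms])
  finally show ?thesis .
qed

lemma lin_comp: assumes "\<forall>x y. g (x + y) = g x + (g y :: int^'m)"
  shows "g x $ i = (\<Sum>j\<in>UNIV. x$j * g (axis j 1) $ i)"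
  by (subst lin_vec[OF assms]) (simp add: sum_component)

lemma lin_hom: assumes "is_hom \<beta>"
  shows "\<beta> x = (\<Sum>j\<in>UNIV. x$j * \<beta> (axis j 1))"
proof -
  have a: "\<forall>x y. \<beta> (x + y) = \<beta> x + \<beta> y" using assms by (simp add: is_hom_def)
  have "\<beta> x = \<beta> (\<Sum>j\<in>UNIV. (x$j) *s axis j (1::int))" by (simp add: basis_expansion)
  also have "\<dots> = (\<Sum>j\<in>UNIV. x$j * \<beta> (axis j 1))" by (simp add: add_sum[OF a] add_mult[OF a])
  finally show ?thesis .
qed

lemma cis_prod: "(\<Prod>j\<in>A. cis (f j)) = cis (\<Sum>j\<in>A. f j)"
  by (induction A rule: infinite_finite_induct) (simp_all add: cis_mult)

lemma cis_pi_int: "cis (pi * of_int m) = (if even m then 1 else -1)"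
proof -
  have "cis (pi * of_int m) = cis pi powi m" by (simp only: cis_power_int mult.commute)
  also have "\<dots> = (if even m then 1 else -1)" by (simp add: power_int_minus_left)
  finally show ?thesis .
qed

definition sgnv :: "int^'n \<Rightarrow> complex^'n" where
  "sgnv b = (\<chi> i. cis (pi * of_int (b $ i)))"

lemma T_act_cis: "T_act g (\<chi> j. cis (\<theta> j)) = (\<chi> i. cis (\<Sum>j\<in>UNIV. of_int (g (axis j 1) $ i) * \<theta> j))"
  by (simp add: T_act_def cis_power_int cis_prod)

lemma T_act_lin: assumes "\<forall>x y. g (x + y) = g x + (g y :: int^'m)"
  shows "T_act g (\<chi> j. cis (t * of_int (b $ j))) = (\<chi> i. cis (t * of_int (g b $ i)))"
proof -
  have "(\<Sum>j\<in>UNIV. of_int (g (axis j 1) $ i) * (t * of_int (b $ j))) = t * of_int (g b $ i)" for i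
    by (simp add: lin_comp[OF assms, of b] sum_distrib_left algebra_simps)
  then show ?thesis by (simp add: T_act_cis)
qed

lemma T_act_sgnv: assumes "\<forall>x y. g (x + y) = g x + (g y :: int^'m)"
  shows "T_act g (sgnv b) = sgnv (g b)"
  unfolding sgnv_def using T_act_lin[OF assms, of pi b] by simp

lemma sgnv_eq: "sgnv b = sgnv c \<longleftrightarrow> (\<forall>i. even (b $ i - c $ i))"
  by (simp add: sgnv_def vec_eq_iff cis_pi_int) blast

lemma sgnv_neg: "sgnv (- b) = sgnv b"
  by (simp add: sgnv_eq)

lemma sgnv_torus: "sgnv b \<in> torus"
  by (simp add: sgnv_def torus_def)

lemma sgnv_sq: "(sgnv b $ i)^2 = 1"
  by (simp add: sgnv_def cis_pi_int)

lemma sq_sgnv: assumes "\<forall>i. (z $ i)^2 = (1::complex)"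
  shows "\<exists>d. z = sgnv d"
proof -
  have "z $ i = 1 \<or> z $ i = -1" for i using assms[rule_format, of i]
    by (metis power2_eq_1_iff)
  then have "z = sgnv (\<chi> i. if z $ i = 1 then 0 else 1)"
    by (auto simp: sgnv_def vec_eq_iff cis_pi_int)
  then show ?thesis by blast
qed

lemma T_one_sgnv: "T_one = sgnv 0"
  by (simp add: T_one_def sgnv_def vec_eq_iff)

lemma trace_refl_diag: "trace (refl_diag k :: rat^'n^'n) = of_nat CARD('n) - 2"
proof -
  have "trace (refl_diag k :: rat^'n^'n) = (\<Sum>i\<in>UNIV. 1 - (if i = k then 2 else 0))"
    by (auto simp: trace_def refl_diag_def intro!: sum.cong)
  also have "\<dots> = of_nat CARD('n) - 2" by (simp add: sum_subtractf)
  finally show ?thesis .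
qed

lemma trace_conj: assumes "P ** Q = mat 1" "Q ** A ** P = (D::rat^'n^'n)"
  shows "trace D = trace A"
proof -
  have "trace D = trace (P ** (Q ** A))" using assms(2) trace_mul_sym by (metis matrix_mul_assoc)
  also have "\<dots> = trace A" using assms(1) by (simp add: matrix_mul_assoc matrix_mul_lid)
  finally show ?thesis .
qed

lemma refl_beta: fixes \<sigma> :: "int^'n \<Rightarrow> int^'n" assumes "is_reflection \<sigma>" "is_hom \<beta>" "\<forall>x. \<sigma> x = x + \<beta> x *s b"
  shows "\<beta> b = -2"
proof -
  obtain P Q :: "rat^'n^'n" and k where PQ: "P ** Q = mat 1" "Q ** rat_mat \<sigma> ** P = refl_diag k"
    using assms(1) unfolding is_reflection_def by blast
  have "trace (rat_mat \<sigma>) = (\<Sum>i\<in>UNIV. 1 + of_int (\<beta> (axis i 1) * b $ i))"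
    by (auto simp: trace_def rat_mat_def assms(3) axis_def intro!: sum.cong)
  also have "\<dots> = of_nat CARD('n) + of_int (\<beta> b)"
    by (simp add: sum.distrib lin_hom[OF assms(2), of b] mult.commute)
  finally have "trace (rat_mat \<sigma>) = of_nat CARD('n) + of_int (\<beta> b)" .
  with trace_conj[OF PQ] trace_refl_diag[of k] show ?thesis by simp
qed

definition defm :: "(int^'n \<Rightarrow> int^'n) \<Rightarrow> 'n \<Rightarrow> 'n \<Rightarrow> int" where
  "defm \<sigma> i j = \<sigma> (axis j 1) $ i - (if i = j then 1 else 0)"

lemma refl_rank1:
  fixes \<sigma> :: "int^'n \<Rightarrow> int^'n"
  assumes "is_reflection \<sigma>"
  shows "(\<forall>i j p q. defm \<sigma> i j * defm \<sigma> p q = defm \<sigma> i q * defm \<sigma> p j) \<and> (\<exists>i j. defm \<sigma> i j \<noteq> 0)"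
proof -
  obtain P Q :: "rat^'n^'n" and k where PQ: "P ** Q = mat 1" "Q ** P = mat 1" "Q ** rat_mat \<sigma> ** P = refl_diag k"
    using assms(1) unfolding is_reflection_def by blast
  have A: "rat_mat \<sigma> = P ** refl_diag k ** Q"
  proof -
    have "P ** (Q ** rat_mat \<sigma> ** P) ** Q = (P ** Q) ** rat_mat \<sigma> ** (P ** Q)"
      by (simp add: matrix_mul_assoc)
    then show ?thesis using PQ by (simp add: matrix_mul_lid matrix_mul_rid)
  qed
  have PD: "(P ** refl_diag k) $ i $ l = P $ i $ l * (1 - (if l = k then 2 else 0))" for i l
  proof -
    have "(P ** refl_diag k) $ i $ l = (\<Sum>m\<in>UNIV. P $ i $ m * (if m = l then (if m = k then -1 else 1) else 0))"
      by (simp add: matrix_matrix_mult_def refl_diag_def)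
    also have "\<dots> = (\<Sum>m\<in>UNIV. if m = l then P $ i $ l * (if l = k then -1 else 1) else 0)"
      by (rule sum.cong) auto
    finally show ?thesis by simp
  qed
  have E: "of_int (defm \<sigma> i j) = - 2 * P $ i $ k * Q $ k $ j" for i j
  proof -
    have "of_int (\<sigma> (axis j 1) $ i) = rat_mat \<sigma> $ i $ j" by (simp add: rat_mat_def)
    also have "\<dots> = (P ** refl_diag k ** Q) $ i $ j" using A by simp
    also have "\<dots> = (\<Sum>l\<in>UNIV. (P ** refl_diag k) $ i $ l * Q $ l $ j)"
      by (simp add: matrix_matrix_mult_def[of "P ** refl_diag k" Q])
    also have "\<dots> = (\<Sum>l\<in>UNIV. P $ i $ l * Q $ l $ j - (if l = k then 2 * P $ i $ k * Q $ k $ j else 0))"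
      by (rule sum.cong) (auto simp: PD algebra_simps)
    also have "\<dots> = (P ** Q) $ i $ j - 2 * P $ i $ k * Q $ k $ j"
      by (simp add: sum_subtractf matrix_matrix_mult_def)
    finally show ?thesis using PQ(1) by (simp add: defm_def mat_def)
  qed
  have 1: "defm \<sigma> i j * defm \<sigma> p q = defm \<sigma> i q * defm \<sigma> p j" for i j p q
  proof -
    have "(of_int (defm \<sigma> i j * defm \<sigma> p q) :: rat) = of_int (defm \<sigma> i q * defm \<sigma> p j)"
      by (simp only: of_int_mult E) (simp add: algebra_simps)
    then show ?thesis by (simp only: of_int_eq_iff)
  qed
  have 2: "\<exists>i j. defm \<sigma> i j \<noteq> 0"
  proof (rule ccontr)
    assume "\<not> ?thesis"
    then have "P $ i $ k * Q $ k $ j = 0" for i j using E[of i j] by simp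
    then have "(Q ** P) $ k $ k = 0" by (simp add: matrix_matrix_mult_def mult.commute[of "Q $ k $ _"]) (intro sum.neutral; auto)
    then show False using PQ(2) by (simp add: mat_def)
  qed
  from 1 2 show ?thesis by blast
qed

lemma bezout_sum: "finite I \<Longrightarrow> \<exists>a. (\<Sum>i\<in>I. a i * c i) = Gcd (c ` I :: int set)"
proof (induction I rule: finite_induct)
  case empty then show ?case by simp
next
  case (insert x F)
  then obtain a where a: "(\<Sum>i\<in>F. a i * c i) = Gcd (c ` F)" by blast
  obtain u v where uv: "u * c x + v * Gcd (c ` F) = gcd (c x) (Gcd (c ` F))" using bezout_int by blast
  define a' where "a' = (\<lambda>i. if i = x then u else v * a i)"
  have "(\<Sum>i\<in>F. a' i * c i) = (\<Sum>i\<in>F. v * (a i * c i))"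
    by (rule sum.cong) (use insert in \<open>auto simp: a'_def\<close>)
  then have "(\<Sum>i\<in>insert x F. a' i * c i) = u * c x + v * (\<Sum>i\<in>F. a i * c i)"
    using insert by (simp add: a'_def sum_distrib_left)
  also have "\<dots> = Gcd (c ` insert x F)" using uv a by simp
  finally show ?case by blast
qed

lemma aut_add: "is_aut g \<Longrightarrow> \<forall>x y. g (x + y) = g x + g y"
  by (simp add: is_aut_def)

lemma refl_exists:
  fixes \<sigma> :: "int^'n \<Rightarrow> int^'n"
  assumes "is_reflection \<sigma>"
  shows "\<exists>v \<phi>. is_hom \<phi> \<and> (\<forall>x. \<sigma> x = x + \<phi> x *s v) \<and> (\<exists>k. odd (v $ k))"
proof -
  define M where "M = defm \<sigma>"
  have minor: "M i j * M p q = M i q * M p j" for i j p q using refl_rank1[OF assms] by (simp add: M_def)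
  obtain i0 j0 where nz: "M i0 j0 \<noteq> 0" using refl_rank1[OF assms] by (auto simp: M_def)
  define c where "c = (\<lambda>i. M i j0)"
  define g where "g = Gcd (range c)"
  obtain a where a: "(\<Sum>i\<in>UNIV. a i * c i) = g" using bezout_sum[of UNIV c] by (auto simp: g_def)
  have gd: "g dvd c i" for i by (simp add: g_def)
  have g0: "g \<noteq> 0" using nz by (auto simp: g_def c_def Gcd_0_iff)
  define v where "v = (\<chi> i. c i div g)"
  have gv: "g * v $ i = c i" for i using gd[of i] by (simp add: v_def)
  have av: "(\<Sum>i\<in>UNIV. a i * v $ i) = 1"
  proof -
    have "g * (\<Sum>i\<in>UNIV. a i * v $ i) = (\<Sum>i\<in>UNIV. a i * c i)"
      by (simp add: sum_distrib_left gv[symmetric] algebra_simps)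
    then show ?thesis using a g0 by simp
  qed
  have odd: "\<exists>k. odd (v $ k)"
  proof (rule ccontr)
    assume "\<not> ?thesis"
    then have "even (\<Sum>i\<in>UNIV. a i * v $ i)" by (auto intro!: dvd_sum)
    then show False using av by simp
  qed
  define f where "f = (\<lambda>j. \<Sum>i\<in>UNIV. a i * M i j)"
  define \<phi> where "\<phi> = (\<lambda>x::int^'n. \<Sum>j\<in>UNIV. x $ j * f j)"
  have hom: "is_hom \<phi>" by (simp add: is_hom_def \<phi>_def sum.distrib algebra_simps)
  have key: "M i j = f j * v $ i" for i j
  proof -
    have "c i0 * f j = (\<Sum>i\<in>UNIV. a i * (M i j * M i0 j0))"
      by (simp add: f_def c_def sum_distrib_left algebra_simps)
    also have "\<dots> = (\<Sum>i\<in>UNIV. a i * (M i j0 * M i0 j))" by (simp add: minor)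
    also have "\<dots> = M i0 j * g" by (simp add: a[symmetric] c_def sum_distrib_left algebra_simps)
    finally have 1: "c i0 * f j = M i0 j * g" .
    have "c i0 * M i j = M i0 j * c i" using minor[of i j i0 j0] by (simp add: c_def algebra_simps)
    also have "\<dots> = M i0 j * (g * v $ i)" by (simp add: gv)
    also have "\<dots> = (M i0 j * g) * v $ i" by (simp add: mult.assoc)
    also have "\<dots> = c i0 * (f j * v $ i)" by (simp add: 1[symmetric] mult.assoc)
    finally show ?thesis using nz by (simp add: c_def)
  qed
  have sig: "\<sigma> x = x + \<phi> x *s v" for x
  proof -
    have add: "\<forall>x y. \<sigma> (x + y) = \<sigma> x + \<sigma> y" using assms by (simp add: is_reflection_def is_aut_def)
    have "\<sigma> x $ i = x $ i + \<phi> x * v $ i" for i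
    proof -
      have "\<sigma> x $ i = (\<Sum>j\<in>UNIV. x $ j * ((if i = j then 1 else 0) + f j * v $ i))"
      proof -
        have k2: "\<sigma> (axis j 1) $ i = (if i = j then 1 else 0) + f j * v $ i" for j
          using key[of i j] unfolding M_def defm_def by linarith
        show ?thesis using lin_comp[OF add, of x i] by (simp add: k2)
      qed
      also have "\<dots> = (\<Sum>j\<in>UNIV. if j = i then x $ i else 0) + (\<Sum>j\<in>UNIV. x $ j * f j) * v $ i"
        by (simp only: distrib_left sum.distrib sum_distrib_right) (intro arg_cong2[where f="(+)"] sum.cong; auto simp: mult_ac)
      also have "\<dots> = x $ i + \<phi> x * v $ i" by (simp add: \<phi>_def)
      finally show ?thesis .
    qed
    then show ?thesis by (simp add: vec_eq_iff)
  qed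
  show ?thesis using hom sig odd by blast
qed

lemma mark_class_neg: "mark_class (- b) (\<lambda>x. - \<beta> x) = mark_class b \<beta>"
  by (auto simp: mark_class_def)

lemma inj_mark:
  fixes \<sigma> :: "int^'n \<Rightarrow> int^'n"
  assumes r: "is_reflection \<sigma>"
    and h1: "is_hom \<beta>" and s1: "\<forall>x. \<sigma> x = x + \<beta> x *s b"
    and h2: "is_hom \<beta>'" and s2: "\<forall>x. \<sigma> x = x + \<beta>' x *s b'"
    and sg: "sgnv b = sgnv b'"
  shows "mark_class b \<beta> = mark_class b' \<beta>'"
proof -
  have a1: "\<forall>x y. \<beta> (x + y) = \<beta> x + \<beta> y" and a2: "\<forall>x y. \<beta>' (x + y) = \<beta>' x + \<beta>' y"
    using h1 h2 by (simp_all add: is_hom_def)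
  have bb: "\<beta> b = -2" by (rule refl_beta[OF r h1 s1])
  have bb': "\<beta>' b' = -2" by (rule refl_beta[OF r h2 s2])
  have eq: "\<beta> x *s b = \<beta>' x *s b'" for x using s1 s2 by (metis add_left_cancel)
  have "b \<noteq> 0" using bb add_zero[OF a1] by auto
  then obtain i0 where i0: "b $ i0 \<noteq> 0" by (auto simp: vec_eq_iff)
  define d where "d = (\<chi> i. (b' $ i - b $ i) div 2)"
  have ev: "even (b' $ i - b $ i)" for i using sg by (simp add: sgnv_eq)
  have bd: "b' = b + 2 *s d" using ev by (auto simp: vec_eq_iff d_def)
  have bd2: "b = b' + (-2) *s d" using bd by (auto simp: vec_eq_iff)
  define p where "p = \<beta>' b"
  define q where "q = \<beta> b'"
  have pe: "p = 2 * (-1 - \<beta>' d)"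
    unfolding p_def by (subst bd2) (simp add: a2 add_mult[OF a2] bb' algebra_simps)
  have qe: "q = 2 * (-1 + \<beta> d)"
    unfolding q_def by (subst bd) (simp add: a1 add_mult[OF a1] bb algebra_simps)
  have e1: "-2 * b $ i = p * b' $ i" for i using eq[of b] bb by (simp add: p_def vec_eq_iff)
  have e2: "q * b $ i = -2 * b' $ i" for i using eq[of b'] bb' by (simp add: q_def vec_eq_iff)
  have "p * q * b $ i0 = 4 * b $ i0"
  proof -
    have "p * q * b $ i0 = p * (-2 * b' $ i0)" using e2[of i0] by (simp add: mult.assoc)
    also have "\<dots> = -2 * (p * b' $ i0)" by simp
    also have "\<dots> = 4 * b $ i0" using e1[of i0] by simp
    finally show ?thesis .
  qed
  then have "p * q = 4" using i0 by simp
  moreover have "p * q = 4 * ((-1 - \<beta>' d) * (-1 + \<beta> d))" by (simp add: pe qe algebra_simps)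
  ultimately have "(-1 - \<beta>' d) * (-1 + \<beta> d) = 1" by simp
  then have "p = 2 \<or> p = -2" using pos_zmult_eq_1_iff_lemma pe by fastforce
  then show ?thesis
  proof
    assume "p = 2"
    then have b': "b' = - b" using e1 by (auto simp: vec_eq_iff)
    have "\<beta>' x = - \<beta> x" for x
    proof -
      have "\<beta> x * b $ i0 = (- \<beta>' x) * b $ i0" using eq[of x] by (auto simp: b' vec_eq_iff)
      then have "(\<beta> x + \<beta>' x) * b $ i0 = 0" by (simp add: algebra_simps)
      then have "\<beta> x + \<beta>' x = 0" using i0 by simp
      then show ?thesis by linarith
    qed
    then have "\<beta>' = (\<lambda>x. - \<beta> x)" by auto
    then show ?thesis using b' mark_class_neg by metis
  next
    assume "p = -2"
    then have b': "b' = b" using e1 by (auto simp: vec_eq_iff)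
    have "\<beta>' x = \<beta> x" for x using eq[of x] i0 by (auto simp: b' vec_eq_iff)
    then have "\<beta>' = \<beta>" by auto
    then show ?thesis using b' by simp
  qed
qed

lemma refl_add: "is_reflection \<sigma> \<Longrightarrow> \<forall>x y. \<sigma> (x + y) = \<sigma> x + \<sigma> y"
  by (simp add: is_reflection_def is_aut_def)

lemma even_triv:
  assumes add: "\<forall>x y. \<sigma> (x + y) = \<sigma> x + \<sigma> y"
    and s: "\<forall>x. \<sigma> x = x + \<beta> x *s b" and ev: "\<forall>i. even (b $ i)"
  shows "trivial_mod2 \<sigma>"
  unfolding trivial_mod2_def
proof (intro ballI impI)
  fix z :: "complex^'a" assume "z \<in> torus" "\<forall>i. (z $ i)^2 = 1"
  then obtain d where d: "z = sgnv d" using sq_sgnv by blast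
  have "T_act \<sigma> z = sgnv (\<sigma> d)" by (simp add: d T_act_sgnv[OF add])
  also have "\<dots> = sgnv d" using ev by (simp add: sgnv_eq s)
  finally show "T_act \<sigma> z = z" by (simp add: d)
qed

lemma L_to_T:
  fixes \<sigma> :: "int^'n \<Rightarrow> int^'n"
  assumes r: "is_reflection \<sigma>" and h: "is_hom \<beta>" and s: "\<forall>x. \<sigma> x = x + \<beta> x *s b"
  shows "is_T_marking \<sigma> (sgnv b)"
proof -
  have add: "\<forall>x y. \<sigma> (x + y) = \<sigma> x + \<sigma> y" by (rule refl_add[OF r])
  have sb: "\<sigma> b = - b" using refl_beta[OF r h s] s by (simp add: vec_eq_iff)
  define \<gamma> where "\<gamma> = (\<lambda>s::real. (\<chi> j. cis (pi * s * of_int (b $ j))) :: complex^'n)"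
  define S where "S = {x \<in> (torus :: (complex^'n) set). T_act \<sigma> x = T_neg x}"
  have PS: "\<gamma> ` {0..1} \<subseteq> S"
  proof
    fix x assume "x \<in> \<gamma> ` {0..1}"
    then obtain t where x: "x = \<gamma> t" by blast
    have "T_act \<sigma> x = (\<chi> i. cis (pi * t * of_int (\<sigma> b $ i)))"
      unfolding x \<gamma>_def by (rule T_act_lin[OF add])
    also have "\<dots> = T_neg x" by (simp add: sb T_neg_def x \<gamma>_def)
    finally show "x \<in> S" by (simp add: S_def torus_def x \<gamma>_def)
  qed
  have conn: "connected (\<gamma> ` {0..1})"
    by (rule connected_continuous_image) (auto simp: \<gamma>_def intro!: continuous_intros)
  have "\<gamma> 0 = T_one" by (simp add: \<gamma>_def T_one_def)
  then have one: "T_one \<in> \<gamma> ` {0..1}" by force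
  have "\<gamma> 1 = sgnv b" by (simp add: \<gamma>_def sgnv_def)
  then have "sgnv b \<in> \<gamma> ` {0..1}" by (metis atLeastAtMost_iff image_eqI order_refl zero_le_one)
  then have comp: "sgnv b \<in> connected_component_set S T_one"
    using connected_component_maximal[OF one conn PS] by blast
  have nt: "\<not> trivial_mod2 \<sigma> \<longrightarrow> sgnv b \<noteq> T_one"
  proof (intro impI notI)
    assume "\<not> trivial_mod2 \<sigma>" "sgnv b = T_one"
    then have "\<forall>i. even (b $ i)" by (simp add: T_one_sgnv sgnv_eq)
    then show False using even_triv[OF add s] \<open>\<not> trivial_mod2 \<sigma>\<close> by blast
  qed
  show ?thesis unfolding is_T_marking_def using comp nt sgnv_torus[of b] sgnv_sq[of b] by (simp add: S_def)
qed

lemma torus_cis: "x \<in> torus \<Longrightarrow> x = (\<chi> j. cis (Arg (x $ j)))"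
proof -
  assume x: "x \<in> torus"
  have "cis (Arg (x $ j)) = x $ j" for j
  proof -
    have n: "norm (x $ j) = 1" using x by (simp add: torus_def)
    then have "x $ j \<noteq> 0" by auto
    then have "cis (Arg (x $ j)) = sgn (x $ j)" by (rule cis_Arg)
    also have "\<dots> = x $ j" using n by (simp add: sgn_div_norm)
    finally show ?thesis .
  qed
  then show ?thesis by (simp add: vec_eq_iff)
qed

lemma cis_eq_one: "cis a = cis b \<Longrightarrow> cis (a - b) = 1"
proof -
  assume "cis a = cis b"
  then have "cis a * cis (- b) = cis b * cis (- b)" by simp
  then show ?thesis by (simp add: cis_mult)
qed

lemma psi_sq:
  fixes \<sigma> :: "int^'n \<Rightarrow> int^'n"
  assumes add: "\<forall>x y. \<sigma> (x + y) = \<sigma> x + \<sigma> y" and s: "\<forall>x. \<sigma> x = x + \<phi> x *s v" and h: "is_hom \<phi>"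
    and x: "x \<in> torus" and xs: "T_act \<sigma> x = T_neg x"
  shows "((x $ i) powi (v $ k) * (x $ k) powi (- (v $ i)))^2 = 1"
proof -
  define \<theta> where "\<theta> = (\<lambda>j. Arg (x $ j))"
  have xe: "x = (\<chi> j. cis (\<theta> j))" using torus_cis[OF x] by (simp add: \<theta>_def)
  define \<Phi> where "\<Phi> = (\<Sum>j\<in>UNIV. of_int (\<phi> (axis j 1)) * \<theta> j)"
  have se: "\<sigma> (axis j 1) $ i = (if i = j then 1 else 0) + \<phi> (axis j 1) * v $ i" for i j
    using s by (simp add: axis_def)
  have A: "cis (2 * \<theta> i + of_int (v $ i) * \<Phi>) = 1" for i
  proof -
    have "(\<Sum>j\<in>UNIV. of_int (\<sigma> (axis j 1) $ i) * \<theta> j) = (\<Sum>j\<in>UNIV. (if j = i then \<theta> i else 0) + of_int (v $ i) * (of_int (\<phi> (axis j 1)) * \<theta> j))"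
      by (rule sum.cong) (auto simp: se algebra_simps)
    also have "\<dots> = \<theta> i + of_int (v $ i) * \<Phi>" by (simp add: sum.distrib \<Phi>_def sum_distrib_left)
    finally have 1: "(\<Sum>j\<in>UNIV. of_int (\<sigma> (axis j 1) $ i) * \<theta> j) = \<theta> i + of_int (v $ i) * \<Phi>" .
    have "T_act \<sigma> x $ i = T_neg x $ i" using xs by simp
    then have "cis (\<theta> i + of_int (v $ i) * \<Phi>) = cis (- \<theta> i)"
      by (simp add: xe T_act_cis T_neg_def 1)
    from cis_eq_one[OF this] show ?thesis by (simp add: algebra_simps)
  qed
  have "((x $ i) powi (v $ k) * (x $ k) powi (- (v $ i)))^2 = cis (2 * (of_int (v $ k) * \<theta> i - of_int (v $ i) * \<theta> k))"
    by (simp add: xe cis_power_int cis_mult power2_eq_square algebra_simps)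
  also have "\<dots> = cis (2 * \<theta> i + of_int (v $ i) * \<Phi>) powi (v $ k) * cis (2 * \<theta> k + of_int (v $ k) * \<Phi>) powi (- v $ i)"
    by (simp add: cis_power_int cis_mult algebra_simps)
  also have "\<dots> = 1" by (simp add: A)
  finally show ?thesis .
qed

lemma T_to_L:
  fixes \<sigma> :: "int^'n \<Rightarrow> int^'n"
  assumes r: "is_reflection \<sigma>" and tm: "is_T_marking \<sigma> h"
  shows "\<exists>b \<beta>. is_hom \<beta> \<and> (\<forall>x. \<sigma> x = x + \<beta> x *s b) \<and> sgnv b = h"
proof -
  have add: "\<forall>x y. \<sigma> (x + y) = \<sigma> x + \<sigma> y" by (rule refl_add[OF r])
  obtain v \<phi> k where hom: "is_hom \<phi>" and s: "\<forall>x. \<sigma> x = x + \<phi> x *s v" and vk: "odd (v $ k)"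
    using refl_exists[OF r] by blast
  define S where "S = {x \<in> (torus :: (complex^'n) set). T_act \<sigma> x = T_neg x}"
  define C where "C = connected_component_set S T_one"
  have hC: "h \<in> C" using tm by (simp add: is_T_marking_def C_def S_def)
  have oneS: "T_one \<in> S"
  proof -
    have "T_act \<sigma> (sgnv 0) = sgnv 0" by (simp add: T_act_sgnv[OF add] add_zero[OF add])
    then show ?thesis by (simp add: S_def T_one_sgnv[symmetric] T_one_def T_neg_def torus_def)
  qed
  have CS: "C \<subseteq> S" by (simp add: C_def connected_component_subset)
  have psi1: "(h $ i) powi (v $ k) * (h $ k) powi (- (v $ i)) = 1" for i
  proof -
    define \<psi> where "\<psi> = (\<lambda>x::complex^'n. (x $ i) powi (v $ k) * (x $ k) powi (- (v $ i)))"
    have nz: "x $ j \<noteq> 0" if "x \<in> C" for x j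
    proof -
      have "norm (x $ j) = 1" using CS that by (auto simp: S_def torus_def)
      then show ?thesis by auto
    qed
    have cont: "continuous_on C \<psi>" unfolding \<psi>_def
      by (intro continuous_intros) (auto simp: nz)

    have conn: "connected (\<psi> ` C)"
      by (rule connected_continuous_image[OF cont]) (simp add: C_def connected_connected_component)
    have sub: "\<psi> ` C \<subseteq> {1, -1}"
    proof
      fix y assume "y \<in> \<psi> ` C"
      then obtain x where "x \<in> C" "y = \<psi> x" by blast
      then have "x \<in> torus" "T_act \<sigma> x = T_neg x" using CS by (auto simp: S_def)
      from psi_sq[OF add s hom this, of i k] \<open>y = \<psi> x\<close> have "y^2 = 1" by (simp add: \<psi>_def)
      then show "y \<in> {1, -1}" by (simp add: power2_eq_1_iff)
    qed
    have "T_one \<in> C" using oneS by (simp add: C_def)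
    moreover have "\<psi> T_one = 1" by (simp add: \<psi>_def T_one_def)
    ultimately have "1 \<in> \<psi> ` C" by force
    moreover have "finite (\<psi> ` C)" using sub finite_subset by blast
    ultimately have "\<psi> ` C = {1}" using connected_finite_iff_sing[OF conn] by (metis empty_iff singletonD)
    then show ?thesis using hC by (auto simp: \<psi>_def)
  qed
  obtain c where hc: "h = sgnv c" using tm sq_sgnv by (auto simp: is_T_marking_def)
  have par: "even (c $ i - c $ k * v $ i)" for i
  proof -
    have "cis (pi * of_int (v $ k * c $ i - v $ i * c $ k)) = 1"
      using psi1[of i] by (simp add: hc sgnv_def cis_power_int cis_mult algebra_simps)
    then have "even (v $ k * c $ i - v $ i * c $ k)" unfolding cis_pi_int by (simp split: if_splits)
    then show ?thesis using vk by (auto simp: algebra_simps elim!: oddE)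
  qed
  show ?thesis
  proof (cases "even (c $ k)")
    case False
    then have "h = sgnv v" using par by (auto simp: hc sgnv_eq elim!: oddE) 
    then show ?thesis using hom s by blast
  next
    case True
    then have "h = T_one" using par by (auto simp: hc sgnv_eq T_one_sgnv)
    then have triv: "trivial_mod2 \<sigma>" using tm by (auto simp: is_T_marking_def)
    have fe: "even (\<phi> (axis j 1))" for j
    proof -
      have "T_act \<sigma> (sgnv (axis j 1)) = sgnv (axis j 1)"
        using triv sgnv_torus[of "axis j 1"] sgnv_sq[of "axis j 1"] unfolding trivial_mod2_def by blast
      then have "sgnv (axis j 1 + \<phi> (axis j 1) *s v) = sgnv (axis j 1)"
        by (simp add: T_act_sgnv[OF add] s[rule_format, of "axis j 1"])
      then have "even (\<phi> (axis j 1) * v $ k)" by (simp add: sgnv_eq) blast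
      then show ?thesis using vk by simp
    qed
    have pe: "even (\<phi> x)" for x by (subst lin_hom[OF hom]) (auto intro!: dvd_sum simp: fe)
    define \<beta> where "\<beta> = (\<lambda>x. \<phi> x div 2)"
    have hb: "is_hom \<beta>" using hom pe by (auto simp: is_hom_def \<beta>_def)
    have sb: "\<forall>x. \<sigma> x = x + \<beta> x *s (2 *s v)"
      using s pe by (auto simp: \<beta>_def vec_eq_iff)
    have "sgnv (2 *s v) = h" using \<open>h = T_one\<close> by (simp add: T_one_sgnv sgnv_eq)
    then show ?thesis using hb sb by blast
  qed
qed

definition markF :: "((int^'n) \<times> (int^'n \<Rightarrow> int)) set \<Rightarrow> complex^'n" where
  "markF M = sgnv (fst (SOME p. p \<in> M))"

lemma markF_class: "markF (mark_class b \<beta>) = sgnv b"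
proof -
  have "(SOME p. p \<in> mark_class b \<beta>) \<in> mark_class b \<beta>" by (rule someI[of _ "(b, \<beta>)"]) (simp add: mark_class_def)
  then show ?thesis by (auto simp: markF_def mark_class_def sgnv_neg)
qed

lemma inv_add: assumes "is_aut w" shows "\<forall>x y. inv w (x + y) = inv w x + inv w y"
proof (intro allI)
  fix x y
  have b: "bij w" and a: "\<forall>x y. w (x + y) = w x + w y" using assms by (auto simp: is_aut_def)
  have "w (inv w x + inv w y) = x + y" using a b by (simp add: bij_is_surj surj_f_inv_f)
  then show "inv w (x + y) = inv w x + inv w y" using b by (metis bij_inv_eq_iff)
qed

lemma act_class: assumes "is_aut w"
  shows "L_act_mark w (mark_class b \<beta>) = mark_class (w b) (\<beta> \<circ> inv w)"
proof -
  have a: "\<forall>x y. w (x + y) = w x + w y" using assms by (auto simp: is_aut_def)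
  show ?thesis by (auto simp: L_act_mark_def mark_class_def add_neg[OF a] o_def)
qed

lemma markF_act: assumes "is_aut w" "is_L_marking \<sigma> M"
  shows "markF (L_act_mark w M) = T_act w (markF M)"
proof -
  have a: "\<forall>x y. w (x + y) = w x + w y" using assms by (auto simp: is_aut_def)
  obtain b \<beta> where M: "M = mark_class b \<beta>" using assms(2) by (auto simp: is_L_marking_def)
  show ?thesis by (simp add: M act_class[OF assms(1)] markF_class T_act_sgnv[OF a])
qed

lemma act_marking: assumes "is_aut w" "is_L_marking \<sigma> M"
  shows "is_L_marking (w \<circ> \<sigma> \<circ> inv w) (L_act_mark w M)"
proof -
  have a: "\<forall>x y. w (x + y) = w x + w y" and bw: "bij w" using assms by (auto simp: is_aut_def)
  obtain b \<beta> where M: "M = mark_class b \<beta>" and h: "is_hom \<beta>" and s: "\<forall>x. \<sigma> x = x + \<beta> x *s b"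
    using assms(2) by (auto simp: is_L_marking_def)
  have h2: "is_hom (\<beta> \<circ> inv w)" using h inv_add[OF assms(1)] by (simp add: is_hom_def)
  have s2: "\<forall>x. (w \<circ> \<sigma> \<circ> inv w) x = x + (\<beta> \<circ> inv w) x *s w b"
    using s a bw by (simp add: add_smult[OF a] bij_is_surj surj_f_inv_f)
  show ?thesis unfolding is_L_marking_def using h2 s2 act_class[OF assms(1)] M by blast
qed

lemma mark_unique:
  assumes r: "is_reflection \<sigma>" and m1: "is_L_marking \<sigma> M1" and m2: "is_L_marking \<sigma> M2"
    and e: "markF M1 = markF M2"
  shows "M1 = M2"
proof -
  obtain b \<beta> where M1: "M1 = mark_class b \<beta>" and h: "is_hom \<beta>" and s: "\<forall>x. \<sigma> x = x + \<beta> x *s b"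
    using m1 by (auto simp: is_L_marking_def)
  obtain b' \<beta>' where M2: "M2 = mark_class b' \<beta>'" and h': "is_hom \<beta>'" and s': "\<forall>x. \<sigma> x = x + \<beta>' x *s b'"
    using m2 by (auto simp: is_L_marking_def)
  show ?thesis using inj_mark[OF r h s h' s'] e by (simp add: M1 M2 markF_class)
qed

lemma markF_T: assumes "is_reflection \<sigma>" "is_L_marking \<sigma> M" shows "is_T_marking \<sigma> (markF M)"
  using assms L_to_T by (auto simp: is_L_marking_def markF_class)

lemma exists_mark: assumes "is_reflection \<sigma>" "is_T_marking \<sigma> h"
  shows "\<exists>M. is_L_marking \<sigma> M \<and> markF M = h"
  using T_to_L[OF assms] markF_class unfolding is_L_marking_def by blast

lemma L_mrs_Some: "(W, mk) \<in> L_mrs \<Longrightarrow> mk \<sigma> = Some M \<Longrightarrow> \<sigma> \<in> reflections_in W \<and> is_L_marking \<sigma> M"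
  unfolding L_mrs_def by (cases "\<sigma> \<in> reflections_in W") force+

lemma W_aut: "refl_group W \<Longrightarrow> w \<in> W \<Longrightarrow> is_aut w"
  by (auto simp: refl_group_def aut_subgroup_def Aut_def)

definition PhiM where "PhiM S = (fst S, \<lambda>\<sigma>. map_option markF (snd S \<sigma>))"

lemma Phi_into: "S \<in> L_mrs \<Longrightarrow> PhiM S \<in> T_mrs"
proof -
  assume S: "S \<in> L_mrs"
  obtain W mk where Sd: "S = (W, mk)" by force
  have L: "(W, mk) \<in> L_mrs" using S Sd by simp
  then have rg: "refl_group W" and none: "\<forall>\<sigma>. \<sigma> \<notin> reflections_in W \<longrightarrow> mk \<sigma> = None"
    and some: "\<forall>\<sigma>\<in>reflections_in W. \<exists>M. mk \<sigma> = Some M \<and> is_L_marking \<sigma> M"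
    and eqv: "\<forall>w\<in>W. \<forall>\<sigma>\<in>reflections_in W. mk (w \<circ> \<sigma> \<circ> inv w) = map_option (L_act_mark w) (mk \<sigma>)"
    by (auto simp: L_mrs_def)
  have "\<forall>\<sigma>\<in>reflections_in W. \<exists>h. map_option markF (mk \<sigma>) = Some h \<and> is_T_marking \<sigma> h"
    using some markF_T by (fastforce simp: reflections_in_def)
  moreover have "\<forall>w\<in>W. \<forall>\<sigma>\<in>reflections_in W. map_option markF (mk (w \<circ> \<sigma> \<circ> inv w)) = map_option (T_act w) (map_option markF (mk \<sigma>))"
  proof (intro ballI)
    fix w \<sigma> assume w: "w \<in> W" and s: "\<sigma> \<in> reflections_in W"
    obtain M where M: "mk \<sigma> = Some M" "is_L_marking \<sigma> M" using some s by blast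
    show "map_option markF (mk (w \<circ> \<sigma> \<circ> inv w)) = map_option (T_act w) (map_option markF (mk \<sigma>))"
      using eqv w s M markF_act[OF W_aut[OF rg w] M(2)] by simp
  qed
  ultimately show ?thesis using rg none by (simp add: T_mrs_def PhiM_def Sd)
qed

lemma Phi_inj: "inj_on PhiM L_mrs"
proof (rule inj_onI)
  fix S1 S2 assume S1: "S1 \<in> L_mrs" and S2: "S2 \<in> L_mrs" and e: "PhiM S1 = PhiM S2"
  obtain W mk where S1d: "S1 = (W, mk)" by force
  obtain W' mk' where S2d: "S2 = (W', mk')" by force
  have W: "W' = W" using e by (simp add: S1d S2d PhiM_def)
  have L1: "(W, mk) \<in> L_mrs" and L2: "(W, mk') \<in> L_mrs" using S1 S2 S1d S2d W by auto
  have em: "map_option markF (mk \<sigma>) = map_option markF (mk' \<sigma>)" for \<sigma>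
    using e by (simp add: S1d S2d PhiM_def W fun_eq_iff)
  have "mk \<sigma> = mk' \<sigma>" for \<sigma>
  proof (cases "\<sigma> \<in> reflections_in W")
    case False then show ?thesis using L1 L2 by (simp add: L_mrs_def)
  next
    case True
    obtain M where M: "mk \<sigma> = Some M" "is_L_marking \<sigma> M" using L1 True by (auto simp: L_mrs_def)
    obtain M' where M': "mk' \<sigma> = Some M'" "is_L_marking \<sigma> M'" using L2 True by (auto simp: L_mrs_def)
    have "markF M = markF M'" using em[of \<sigma>] M M' by simp
    then have "M = M'" using mark_unique[OF _ M(2) M'(2)] True by (simp add: reflections_in_def)
    then show ?thesis using M M' by simp
  qed
  then show "S1 = S2" using S1d S2d W by auto
qed

lemma Phi_onto: "T \<in> T_mrs \<Longrightarrow> T \<in> PhiM ` L_mrs"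
proof -
  assume T: "T \<in> T_mrs"
  obtain W mh where Td: "T = (W, mh)" by force
  have rg: "refl_group W" and none: "\<forall>\<sigma>. \<sigma> \<notin> reflections_in W \<longrightarrow> mh \<sigma> = None"
    and some: "\<forall>\<sigma>\<in>reflections_in W. \<exists>h. mh \<sigma> = Some h \<and> is_T_marking \<sigma> h"
    and eqv: "\<forall>w\<in>W. \<forall>\<sigma>\<in>reflections_in W. mh (w \<circ> \<sigma> \<circ> inv w) = map_option (T_act w) (mh \<sigma>)"
    using T Td by (auto simp: T_mrs_def)
  define mk where "mk = (\<lambda>\<sigma>. if \<sigma> \<in> reflections_in W then Some (SOME M. is_L_marking \<sigma> M \<and> markF M = the (mh \<sigma>)) else None)"
  have mkS: "mk \<sigma> = Some M \<and> is_L_marking \<sigma> M \<and> markF M = h"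
    if s: "\<sigma> \<in> reflections_in W" and h: "mh \<sigma> = Some h" and M: "M = (SOME M. is_L_marking \<sigma> M \<and> markF M = the (mh \<sigma>))" for \<sigma> h M
  proof -
    have "is_T_marking \<sigma> h" using some s h by auto
    then have "\<exists>M. is_L_marking \<sigma> M \<and> markF M = the (mh \<sigma>)"
      using exists_mark s h by (auto simp: reflections_in_def)
    then have "is_L_marking \<sigma> M \<and> markF M = the (mh \<sigma>)" unfolding M by (rule someI_ex)
    then show ?thesis using s h by (simp add: mk_def M)
  qed
  have Lm: "(W, mk) \<in> L_mrs"
  proof -
    have "\<forall>\<sigma>\<in>reflections_in W. \<exists>M. mk \<sigma> = Some M \<and> is_L_marking \<sigma> M"
      using mkS some by blast
    moreover have "\<forall>w\<in>W. \<forall>\<sigma>\<in>reflections_in W. mk (w \<circ> \<sigma> \<circ> inv w) = map_option (L_act_mark w) (mk \<sigma>)"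
    proof (intro ballI)
      fix w \<sigma> assume w: "w \<in> W" and s: "\<sigma> \<in> reflections_in W"
      obtain h where h: "mh \<sigma> = Some h" using some s by blast
      obtain M where M: "mk \<sigma> = Some M" "is_L_marking \<sigma> M" "markF M = h" using mkS[OF s h] by blast
      have e2: "mh (w \<circ> \<sigma> \<circ> inv w) = Some (T_act w h)" using eqv w s h by simp
      then have s2: "w \<circ> \<sigma> \<circ> inv w \<in> reflections_in W" using none by fastforce
      obtain M2 where M2: "mk (w \<circ> \<sigma> \<circ> inv w) = Some M2" "is_L_marking (w \<circ> \<sigma> \<circ> inv w) M2" "markF M2 = T_act w h"
        using mkS[OF s2 e2] by blast
      have aw: "is_aut w" by (rule W_aut[OF rg w])
      have "M2 = L_act_mark w M"
        using mark_unique[OF _ M2(2) act_marking[OF aw M(2)]] s2 M2(3) markF_act[OF aw M(2)] M(3)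
        by (simp add: reflections_in_def)
      then show "mk (w \<circ> \<sigma> \<circ> inv w) = map_option (L_act_mark w) (mk \<sigma>)" using M M2 by simp
    qed
    moreover have "\<forall>\<sigma>. \<sigma> \<notin> reflections_in W \<longrightarrow> mk \<sigma> = None" by (simp add: mk_def)
    ultimately show ?thesis using rg by (simp add: L_mrs_def)
  qed
  have "PhiM (W, mk) = (W, mh)"
  proof -
    have "map_option markF (mk \<sigma>) = mh \<sigma>" for \<sigma>
    proof (cases "\<sigma> \<in> reflections_in W")
      case False then show ?thesis using none by (simp add: mk_def)
    next
      case True
      obtain h where h: "mh \<sigma> = Some h" using some True by blast
      show ?thesis using mkS[OF True h] h by simp
    qed
    then show ?thesis by (simp add: PhiM_def fun_eq_iff)
  qed
  then show ?thesis using Lm Td by force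
qed

theorem proposition2p16:
  "\<exists>\<Phi>. bij_betw \<Phi> (L_mrs :: ((int^'n::finite \<Rightarrow> int^'n) set \<times> _) set) T_mrs \<and>
        (\<forall>S\<in>L_mrs. fst (\<Phi> S) = fst S) \<and>
        (\<forall>g\<in>Aut. \<forall>S\<in>L_mrs. \<Phi> (L_transport g S) = T_transport g (\<Phi> S))"
proof (intro exI conjI)
  show "bij_betw PhiM (L_mrs :: ((int^'n::finite \<Rightarrow> int^'n) set \<times> _) set) T_mrs"
    unfolding bij_betw_def using Phi_inj Phi_into Phi_onto by blast
  show "\<forall>S\<in>L_mrs. fst (PhiM S) = fst S" by (simp add: PhiM_def)
  show "\<forall>g\<in>(Aut :: (int^'n \<Rightarrow> int^'n) set). \<forall>S\<in>L_mrs. PhiM (L_transport g S) = T_transport g (PhiM S)"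
  proof (intro ballI)
    fix g :: "int^'n \<Rightarrow> int^'n" and S :: "(int^'n \<Rightarrow> int^'n) set \<times> _" assume g: "g \<in> Aut" and S: "S \<in> L_mrs"
    obtain W mk where Sd: "S = (W, mk)" by force
    have ag: "is_aut g" using g by (simp add: Aut_def)
    have "map_option markF (map_option (L_act_mark g) (mk \<tau>)) = map_option (T_act g) (map_option markF (mk \<tau>))" for \<tau> :: "int^'n \<Rightarrow> int^'n"
    proof (cases "mk \<tau>")
      case None then show ?thesis by simp
    next
      case (Some M)
      then have "is_L_marking \<tau> M" using L_mrs_Some S Sd by blast
      then show ?thesis using Some markF_act[OF ag] by simp
    qed
    then show "PhiM (L_transport g S) = T_transport g (PhiM S)"
      by (simp add: PhiM_def L_transport_def T_transport_def Sd)
  qed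
qed

end
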